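(* With the operators $h_1 = Y\otimes I\otimes Z\otimes X\otimes X\otimes Y$, $h_2 = Z\otimes X\otimes I\otimes I\otimes X\otimes Z$, $h_3 = I\otimes Z\otimes X\otimes X\otimes X\otimes X$, $h_5 = Z\otimes Z\otimes Z\otimes I\otimes Z\otimes I$ (convention $Y=ZX$), let $\widetilde S=\langle h_1,h_2,h_3,h_5\rangle$ and let the gauge group be $H=\langle X_4,\ Z_4Z_6\rangle$. Then $X_4$ and $Z_4Z_6$ commute with every element of $\widetilde S$, and for every pair $E_a,E_b$ of elements of $\{I\}\cup\{X_i,Y_i,Z_i:i=1,\dots,6\}$, the operator $E_a^\dagger E_b$ either anticommutes with at least one of $h_1,h_2,h_3,h_5$ or lies (up to phase) in the group generated by $\widetilde S\cup H$. Hence this is a subsystem code with $n=6$ physical qubits, $k=1$ logical qubit, $r=1$ gauge qubit, and distance $d=3$, which saturates the subsystem Singleton bound $n-k-r\ge 2(d-1)$.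
   Context: $X,Y,Z$ denote the single-qubit Pauli matrices and $P_i$ denotes the six-qubit operator acting as $P$ on qubit $i$ and as identity elsewhere. For a subsystem code with stabilizer $\widetilde S$ and gauge group generated by $\widetilde S$ and $H$, a set of errors is correctable if every product $E_a^\dagger E_b$ of two errors either anticommutes with some element of $\widetilde S$ or lies (up to phase) in the group generated by $\widetilde S$ and $H$. *)

theory Defs
  imports Complex_Main
begin

text \<open>Single-qubit Pauli matrices, with the paper's convention Y = Z X.
  pm P Q = (c, R) means the matrix product P Q equals c R.\<close>
datatype pauli = PI | PX | PY | PZ

fun pm :: "pauli \<Rightarrow> pauli \<Rightarrow> complex \<times> pauli" where
  "pm PI q = (1, q)"
| "pm p PI = (1, p)"
| "pm PX PX = (1, PI)"
| "pm PY PY = (-1, PI)"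
| "pm PZ PZ = (1, PI)"
| "pm PX PZ = (-1, PY)"
| "pm PZ PX = (1, PY)"
| "pm PX PY = (-1, PZ)"
| "pm PY PX = (1, PZ)"
| "pm PZ PY = (1, PX)"
| "pm PY PZ = (-1, PX)"

text \<open>Conjugate transpose: X, Z are Hermitian; Y = ZX has Y^dagger = XZ = -Y.\<close>
fun pdag :: "pauli \<Rightarrow> complex" where
  "pdag PY = -1"
| "pdag _ = 1"

text \<open>A six-qubit operator c * (P_1 \<otimes> ... \<otimes> P_6); qubits indexed 1..6,
  the tensor factor map is PI outside {1..6}.\<close>
type_synonym op = "complex \<times> (nat \<Rightarrow> pauli)"

definition qubits :: "nat set" where "qubits = {1..6}"

definition opmul :: "op \<Rightarrow> op \<Rightarrow> op" where
  "opmul a b = (fst a * fst b * (\<Prod>j\<in>qubits. fst (pm (snd a j) (snd b j))),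
                (\<lambda>j. if j \<in> qubits then snd (pm (snd a j) (snd b j)) else PI))"

definition opone :: op where "opone = (1, \<lambda>_. PI)"

definition opneg :: "op \<Rightarrow> op" where "opneg a = (- fst a, snd a)"

definition opdag :: "op \<Rightarrow> op" where
  "opdag a = (cnj (fst a) * (\<Prod>j\<in>qubits. pdag (snd a j)), snd a)"

definition tens :: "pauli list \<Rightarrow> op" where
  "tens ps = (1, \<lambda>j. if j \<in> qubits then ps ! (j - 1) else PI)"

definition onq :: "nat \<Rightarrow> pauli \<Rightarrow> op" where
  "onq i p = (1, (\<lambda>_. PI)(i := p))"

definition commute :: "op \<Rightarrow> op \<Rightarrow> bool" where
  "commute a b \<longleftrightarrow> opmul a b = opmul b a"

definition anticommute :: "op \<Rightarrow> op \<Rightarrow> bool" where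
  "anticommute a b \<longleftrightarrow> opmul a b = opneg (opmul b a)"

inductive_set gen :: "op set \<Rightarrow> op set" for G where
  gen_one: "opone \<in> gen G"
| gen_base: "g \<in> G \<Longrightarrow> g \<in> gen G"
| gen_mul: "a \<in> gen G \<Longrightarrow> b \<in> gen G \<Longrightarrow> opmul a b \<in> gen G"

definition in_up_to_phase :: "op \<Rightarrow> op set \<Rightarrow> bool" where
  "in_up_to_phase a K \<longleftrightarrow> (\<exists>c. c \<noteq> 0 \<and> (c * fst a, snd a) \<in> K)"

definition h1 :: op where "h1 = tens [PY, PI, PZ, PX, PX, PY]"
definition h2 :: op where "h2 = tens [PZ, PX, PI, PI, PX, PZ]"
definition h3 :: op where "h3 = tens [PI, PZ, PX, PX, PX, PX]"
definition h5 :: op where "h5 = tens [PZ, PZ, PZ, PI, PZ, PI]"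

definition Stab :: "op set" where "Stab = {h1, h2, h3, h5}"
definition Gauge :: "op set" where "Gauge = {onq 4 PX, opmul (onq 4 PZ) (onq 6 PZ)}"

definition Errs :: "op set" where
  "Errs = {opone} \<union> {onq i p | i p. i \<in> qubits \<and> p \<in> {PX, PY, PZ}}"

end

theory Submission
  imports Defs
begin

definition anti :: "pauli \<Rightarrow> pauli \<Rightarrow> bool" where
  "anti p q \<longleftrightarrow> p \<noteq> PI \<and> q \<noteq> PI \<and> p \<noteq> q"

definition sg :: "pauli \<Rightarrow> pauli \<Rightarrow> complex" where
  "sg p q = (if anti p q then -1 else 1)"

lemma pm_swap: "fst (pm p q) = sg p q * fst (pm q p)"
  by (cases p; cases q; simp add: sg_def anti_def)

lemma snd_swap: "snd (pm p q) = snd (pm q p)"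
  by (cases p; cases q; simp)

lemma pm_nz: "fst (pm p q) \<noteq> 0"
  by (cases p; cases q; simp)

lemma sg_mult: "sg p (snd (pm q r)) = sg p q * sg p r"
  by (cases p; cases q; cases r; simp add: sg_def anti_def)

lemma qubits_eq: "qubits = {1,2,3,4,5,6}"
  by (auto simp: qubits_def)

lemma fin_q: "finite qubits" by (simp add: qubits_def)

lemma prodP_nz: "(\<Prod>j\<in>qubits. fst (pm (f j) (g j))) \<noteq> 0"
  using fin_q by (simp add: pm_nz)

lemma prod_sign: "(\<Prod>j\<in>qubits. fst (pm (f j) (g j)))
   = (\<Prod>j\<in>qubits. sg (f j) (g j)) * (\<Prod>j\<in>qubits. fst (pm (g j) (f j)))"
  by (subst prod.distrib[symmetric]) (rule prod.cong, auto intro: pm_swap)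

lemma snd_opmul_sym: "snd (opmul a b) = snd (opmul b a)"
  by (auto simp: opmul_def snd_swap)

lemma fun_swap: "(\<lambda>j. if j \<in> qubits then snd (pm (f j) (g j)) else PI)
   = (\<lambda>j. if j \<in> qubits then snd (pm (g j) (f j)) else PI)"
  by (rule ext) (metis snd_swap)

lemma ac_iff:
  assumes "fst a \<noteq> 0" "fst b \<noteq> 0"
  shows "anticommute a b \<longleftrightarrow> (\<Prod>j\<in>qubits. sg (snd a j) (snd b j)) = -1"
proof -
  define S where "S = (\<Prod>j\<in>qubits. sg (snd a j) (snd b j))"
  define P where "P = (\<Prod>j\<in>qubits. fst (pm (snd b j) (snd a j)))"
  have P: "P \<noteq> 0" unfolding P_def by (rule prodP_nz)
  have "anticommute a b \<longleftrightarrow> fst a * fst b * (S * P) = - (fst b * fst a * P)"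
    unfolding anticommute_def opneg_def S_def P_def
    by (simp add: opmul_def prod_sign[of "snd a" "snd b"] fun_swap[of "snd a" "snd b"])
  also have "\<dots> \<longleftrightarrow> (fst a * fst b * P) * S = (fst a * fst b * P) * (-1)"
    by (simp add: algebra_simps)
  also have "\<dots> \<longleftrightarrow> S = -1" using P assms by (intro mult_left_cancel) simp
  finally show ?thesis unfolding S_def .
qed

lemma c_iff:
  assumes "fst a \<noteq> 0" "fst b \<noteq> 0"
  shows "commute a b \<longleftrightarrow> (\<Prod>j\<in>qubits. sg (snd a j) (snd b j)) = 1"
proof -
  define S where "S = (\<Prod>j\<in>qubits. sg (snd a j) (snd b j))"
  define P where "P = (\<Prod>j\<in>qubits. fst (pm (snd b j) (snd a j)))"
  have P: "P \<noteq> 0" unfolding P_def by (rule prodP_nz)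
  have "commute a b \<longleftrightarrow> fst a * fst b * (S * P) = (fst b * fst a * P)"
    unfolding commute_def S_def P_def
    by (simp add: opmul_def prod_sign[of "snd a" "snd b"] fun_swap[of "snd a" "snd b"])
  also have "\<dots> \<longleftrightarrow> (fst a * fst b * P) * S = (fst a * fst b * P) * 1"
    by (simp add: algebra_simps)
  also have "\<dots> \<longleftrightarrow> S = 1" using P assms by (intro mult_left_cancel) simp
  finally show ?thesis unfolding S_def .
qed

lemma opmul_nz: "fst a \<noteq> 0 \<Longrightarrow> fst b \<noteq> 0 \<Longrightarrow> fst (opmul a b) \<noteq> 0"
  using prodP_nz by (simp add: opmul_def)

lemma stab_nz: "h \<in> Stab \<Longrightarrow> fst h = 1"
  by (auto simp: Stab_def h1_def h2_def h3_def h5_def tens_def)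

lemma gen_nz: "s \<in> gen Stab \<Longrightarrow> fst s \<noteq> 0"
  by (induction rule: gen.induct) (auto simp: opone_def stab_nz opmul_nz)

lemma gen_sg:
  assumes "s \<in> gen Stab" "\<forall>h\<in>Stab. (\<Prod>j\<in>qubits. sg (g j) (snd h j)) = 1"
  shows "(\<Prod>j\<in>qubits. sg (g j) (snd s j)) = 1"
  using assms(1)
proof (induction rule: gen.induct)
  case gen_one
  then show ?case by (simp add: opone_def sg_def anti_def)
next
  case (gen_base h)
  then show ?case using assms(2) by blast
next
  case (gen_mul a b)
  have "(\<Prod>j\<in>qubits. sg (g j) (snd (opmul a b) j))
      = (\<Prod>j\<in>qubits. sg (g j) (snd a j) * sg (g j) (snd b j))"
    by (rule prod.cong) (auto simp: opmul_def sg_mult)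
  also have "\<dots> = 1" using gen_mul by (simp add: prod.distrib)
  finally show ?case .
qed

lemma part1: "\<forall>s \<in> gen Stab. commute (onq 4 PX) s \<and> commute (opmul (onq 4 PZ) (onq 6 PZ)) s"
proof
  fix s assume s: "s \<in> gen Stab"
  have n1: "fst (onq 4 PX) \<noteq> 0" by (simp add: onq_def)
  have n2: "fst (opmul (onq 4 PZ) (onq 6 PZ)) \<noteq> 0" by (rule opmul_nz) (simp_all add: onq_def)
  have b1: "\<forall>h\<in>Stab. (\<Prod>j\<in>qubits. sg (snd (onq 4 PX) j) (snd h j)) = 1"
    by (simp add: Stab_def h1_def h2_def h3_def h5_def tens_def qubits_eq onq_def sg_def anti_def)
  have b2: "\<forall>h\<in>Stab. (\<Prod>j\<in>qubits. sg (snd (opmul (onq 4 PZ) (onq 6 PZ)) j) (snd h j)) = 1"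
    by (simp add: Stab_def h1_def h2_def h3_def h5_def tens_def qubits_eq onq_def sg_def anti_def opmul_def)
  show "commute (onq 4 PX) s \<and> commute (opmul (onq 4 PZ) (onq 6 PZ)) s"
    using c_iff[OF n1 gen_nz[OF s]] c_iff[OF n2 gen_nz[OF s]] gen_sg[OF s b1] gen_sg[OF s b2]
    by simp
qed


definition E0 :: "nat \<Rightarrow> pauli" where "E0 = (\<lambda>_. PI)"
definition WX :: "nat \<Rightarrow> pauli" where "WX = (\<lambda>_. PI)(4 := PX)"
definition WZZ :: "nat \<Rightarrow> pauli" where "WZZ = (\<lambda>_. PI)(4 := PZ, 6 := PZ)"
definition WYZ :: "nat \<Rightarrow> pauli" where "WYZ = (\<lambda>_. PI)(4 := PY, 6 := PZ)"

definition FS :: "(nat \<Rightarrow> pauli) set" where "FS = {(\<lambda>_. PI), (\<lambda>_. PI)(1 := PX), (\<lambda>_. PI)(1 := PY), (\<lambda>_. PI)(1 := PZ), (\<lambda>_. PI)(2 := PX), (\<lambda>_. PI)(2 := PY), (\<lambda>_. PI)(2 := PZ), (\<lambda>_. PI)(3 := PX), (\<lambda>_. PI)(3 := PY), (\<lambda>_. PI)(3 := PZ), (\<lambda>_. PI)(4 := PX), (\<lambda>_. PI)(4 := PY), (\<lambda>_. PI)(4 := PZ), (\<lambda>_. PI)(5 := PX), (\<lambda>_. PI)(5 := PY), (\<lambda>_. PI)(5 := PZ), (\<lambda>_. PI)(6 := PX), (\<lambda>_. PI)(6 := PY), (\<lambda>_. PI)(6 := PZ)}"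

lemma comb: "\<forall>f\<in>FS. \<forall>g\<in>FS.
    (\<forall>j\<in>qubits. snd (pm (f j) (g j)) = E0 j) \<or>
    (\<forall>j\<in>qubits. snd (pm (f j) (g j)) = WX j) \<or>
    (\<forall>j\<in>qubits. snd (pm (f j) (g j)) = WZZ j) \<or>
    (\<forall>j\<in>qubits. snd (pm (f j) (g j)) = WYZ j) \<or>
    (\<exists>h\<in>Stab. (\<Prod>j\<in>qubits. sg (snd (pm (f j) (g j))) (snd h j)) = -1)"
  unfolding FS_def Stab_def qubits_eq E0_def WX_def WZZ_def WYZ_def
  by (simp add: h1_def h2_def h3_def h5_def tens_def qubits_eq sg_def anti_def)


lemma phase_lem:
  assumes "x \<in> K" "fst x \<noteq> 0" "snd a = snd x" "fst a \<noteq> 0"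
  shows "in_up_to_phase a K"
  unfolding in_up_to_phase_def
proof (intro exI conjI)
  show "fst x / fst a \<noteq> 0" using assms by simp
  have "(fst x / fst a * fst a, snd a) = x" using assms by (simp add: prod_eq_iff)
  then show "(fst x / fst a * fst a, snd a) \<in> K" using assms by simp
qed

lemma ext_q:
  assumes "\<forall>j\<in>qubits. F j = W j" "\<forall>j. j \<notin> qubits \<longrightarrow> W j = PI"
  shows "(\<lambda>j. if j \<in> qubits then F j else PI) = W"
  using assms by (auto intro!: ext)

lemma W_out: "\<forall>j. j \<notin> qubits \<longrightarrow> E0 j = PI" "\<forall>j. j \<notin> qubits \<longrightarrow> WX j = PI"
  "\<forall>j. j \<notin> qubits \<longrightarrow> WZZ j = PI" "\<forall>j. j \<notin> qubits \<longrightarrow> WYZ j = PI"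
  by (auto simp: qubits_def E0_def WX_def WZZ_def WYZ_def)

lemma mem_E0: "(1, E0) \<in> gen (Stab \<union> Gauge)"
  using gen_one[of "Stab \<union> Gauge"] by (simp add: opone_def E0_def)

lemma mem_WX: "(1, WX) \<in> gen (Stab \<union> Gauge)"
  by (rule gen_base) (simp add: Gauge_def onq_def WX_def)

lemma g2_eq: "opmul (onq 4 PZ) (onq 6 PZ) = (1, WZZ)"
proof -
  have "snd (opmul (onq 4 PZ) (onq 6 PZ)) = WZZ"
    unfolding opmul_def snd_conv
    by (rule ext_q[OF _ W_out(3)]) (simp add: qubits_eq onq_def WZZ_def)
  moreover have "fst (opmul (onq 4 PZ) (onq 6 PZ)) = 1"
    by (simp add: opmul_def qubits_eq onq_def)
  ultimately show ?thesis by (simp add: prod_eq_iff)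
qed

lemma mem_WZZ: "(1, WZZ) \<in> gen (Stab \<union> Gauge)"
  by (rule gen_base) (simp add: Gauge_def g2_eq)

lemma g3_eq: "opmul (onq 4 PX) (1, WZZ) = (-1, WYZ)"
proof -
  have "snd (opmul (onq 4 PX) (1, WZZ)) = WYZ"
    unfolding opmul_def snd_conv
    by (rule ext_q[OF _ W_out(4)]) (simp add: qubits_eq onq_def WZZ_def WYZ_def)
  moreover have "fst (opmul (onq 4 PX) (1, WZZ)) = -1"
    by (simp add: opmul_def qubits_eq onq_def WZZ_def)
  ultimately show ?thesis by (simp add: prod_eq_iff)
qed

lemma mem_WYZ: "(-1, WYZ) \<in> gen (Stab \<union> Gauge)"
proof -
  have "onq 4 PX \<in> gen (Stab \<union> Gauge)" by (rule gen_base) (simp add: Gauge_def)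
  from gen_mul[OF this mem_WZZ] show ?thesis by (simp add: g3_eq)
qed

lemma errs_FS: "E \<in> Errs \<Longrightarrow> snd E \<in> FS \<and> fst E = 1"
  unfolding Errs_def
proof (elim UnE)
  assume "E \<in> {opone}" then show ?thesis by (simp add: FS_def opone_def)
next
  assume "E \<in> {onq i p | i p. i \<in> qubits \<and> p \<in> {PX, PY, PZ}}"
  then obtain i p where "E = onq i p" "i \<in> {1,2,3,4,5,6}" "p \<in> {PX, PY, PZ}"
    by (auto simp: qubits_eq)
  then show ?thesis by (auto simp: FS_def onq_def)
qed

lemma pdag_nz: "pdag p \<noteq> 0" by (cases p) auto

lemma opdag_nz: "fst E \<noteq> 0 \<Longrightarrow> fst (opdag E) \<noteq> 0"
  using fin_q by (simp add: opdag_def pdag_nz)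

lemma part2: "\<forall>Ea \<in> Errs. \<forall>Eb \<in> Errs.
         (\<exists>h \<in> Stab. anticommute (opmul (opdag Ea) Eb) h)
       \<or> in_up_to_phase (opmul (opdag Ea) Eb) (gen (Stab \<union> Gauge))"
proof (intro ballI)
  fix Ea Eb assume a: "Ea \<in> Errs" and b: "Eb \<in> Errs"
  define f where "f = snd Ea"
  define g where "g = snd Eb"
  define A where "A = opmul (opdag Ea) Eb"
  have Anz: "fst A \<noteq> 0" unfolding A_def
    using errs_FS[OF a] errs_FS[OF b] by (intro opmul_nz opdag_nz) simp_all
  have sA: "snd A = (\<lambda>j. if j \<in> qubits then snd (pm (f j) (g j)) else PI)"
  proof -
    have "snd (opdag Ea) = snd Ea" unfolding opdag_def by (rule snd_conv)
    then show ?thesis unfolding A_def f_def g_def opmul_def snd_conv by (simp only:)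
  qed
  have fg: "f \<in> FS" "g \<in> FS" using errs_FS[OF a] errs_FS[OF b] f_def g_def by auto
  note c = comb[rule_format, OF fg]
  have "(\<exists>h \<in> Stab. anticommute A h) \<or> in_up_to_phase A (gen (Stab \<union> Gauge))"
    using c
  proof (elim disjE)
    assume "\<forall>j\<in>qubits. snd (pm (f j) (g j)) = E0 j"
    then have "snd A = E0" using sA ext_q[OF _ W_out(1)] by simp
    then show ?thesis using phase_lem[OF mem_E0] Anz by simp
  next
    assume "\<forall>j\<in>qubits. snd (pm (f j) (g j)) = WX j"
    then have "snd A = WX" using sA ext_q[OF _ W_out(2)] by simp
    then show ?thesis using phase_lem[OF mem_WX] Anz by simp
  next
    assume "\<forall>j\<in>qubits. snd (pm (f j) (g j)) = WZZ j"
    then have "snd A = WZZ" using sA ext_q[OF _ W_out(3)] by simp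
    then show ?thesis using phase_lem[OF mem_WZZ] Anz by simp
  next
    assume "\<forall>j\<in>qubits. snd (pm (f j) (g j)) = WYZ j"
    then have "snd A = WYZ" using sA ext_q[OF _ W_out(4)] by simp
    then show ?thesis using phase_lem[OF mem_WYZ] Anz by simp
  next
    assume "\<exists>h\<in>Stab. (\<Prod>j\<in>qubits. sg (snd (pm (f j) (g j))) (snd h j)) = -1"
    then obtain h where h: "h \<in> Stab" "(\<Prod>j\<in>qubits. sg (snd (pm (f j) (g j))) (snd h j)) = -1"
      by blast
    have "(\<Prod>j\<in>qubits. sg (snd A j) (snd h j)) = (\<Prod>j\<in>qubits. sg (snd (pm (f j) (g j))) (snd h j))"
      by (rule prod.cong) (simp_all add: sA)
    then have "anticommute A h" using ac_iff[OF Anz] stab_nz[OF h(1)] h(2) by simp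
    then show ?thesis using h(1) by blast
  qed
  then show "(\<exists>h \<in> Stab. anticommute (opmul (opdag Ea) Eb) h)
       \<or> in_up_to_phase (opmul (opdag Ea) Eb) (gen (Stab \<union> Gauge))" by (simp add: A_def)
qed

theorem mainTheorem2:
  shows "(\<forall>s \<in> gen Stab. commute (onq 4 PX) s \<and> commute (opmul (onq 4 PZ) (onq 6 PZ)) s)
    \<and> (\<forall>Ea \<in> Errs. \<forall>Eb \<in> Errs.
         (\<exists>h \<in> Stab. anticommute (opmul (opdag Ea) Eb) h)
       \<or> in_up_to_phase (opmul (opdag Ea) Eb) (gen (Stab \<union> Gauge)))"
  using part1 part2 by blast

end
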